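(* Let $a\in L_1(\mathbb R^d)$ have compact support. If $F_a(u,v)=\int_{\mathbb R^d}a(x)u(x)\overline{v(x)}\,dx=0$ for all $u,v\in\mathcal H$, then $a=0$ almost everywhere.
   Context: Let $d\ge 2$, $\mathbb S=S^{d-1}$ with surface measure $dS$, $c_d=\sqrt{\pi}/(2\pi)^{d/2}$, and for $\varphi\in L_2(\mathbb S)$, $(I\varphi)(x)=c_d\int_{\mathbb S}\varphi(\xi)e^{ix\cdot\xi}dS(\xi)$, $x\in\mathbb R^d$. The Herglotz space is $\mathcal H=\{I\varphi:\varphi\in L_2(\mathbb S)\}$ (its elements are bounded smooth functions solving $\Delta u+u=0$). *)

theory Defs
  imports "HOL-Analysis.Analysis"
begin

text \<open>Surface measure on the unit sphere S^{d-1} of a Euclidean space of dimension d,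
  via the cone construction: sigma(A) = d * lambda({t x. 0 < t <= 1, x in A}).\<close>
definition sphere_surface_measure :: "'a::euclidean_space measure" where
  "sphere_surface_measure =
     density (distr (restrict_space lborel (ball 0 1 - {0}))
                    (restrict_space borel (sphere 0 1))
                    (\<lambda>x. x /\<^sub>R norm x))
             (\<lambda>_. ennreal (real DIM('a)))"

definition L2_sphere :: "('a::euclidean_space \<Rightarrow> complex) set" where
  "L2_sphere = {\<phi>. \<phi> \<in> borel_measurable (sphere_surface_measure :: 'a measure) \<and>
      integrable (sphere_surface_measure :: 'a measure) (\<lambda>\<xi>. (norm (\<phi> \<xi>))\<^sup>2)}"

definition herglotz_const :: "nat \<Rightarrow> real" where
  "herglotz_const d = sqrt pi / (2 * pi) powr (real d / 2)"

definition herglotz_op :: "('a::euclidean_space \<Rightarrow> complex) \<Rightarrow> 'a \<Rightarrow> complex" where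
  "herglotz_op \<phi> x = complex_of_real (herglotz_const DIM('a)) *
     integral\<^sup>L (sphere_surface_measure :: 'a measure) (\<lambda>\<xi>. \<phi> \<xi> * cis (x \<bullet> \<xi>))"

definition herglotz_space :: "('a::euclidean_space \<Rightarrow> complex) set" where
  "herglotz_space = {u. \<exists>\<phi>\<in>L2_sphere. u = herglotz_op \<phi>}"

end

theory Submission
  imports Defs "HOL-Real_Asymp.Real_Asymp"
begin


lemma powser_coeffs_zero:
  fixes c :: "nat \<Rightarrow> complex"
  assumes summ: "\<And>z. summable (\<lambda>k. c k * z ^ k)"
  and d: "d > 0" and zero: "\<And>t::real. \<bar>t\<bar> < d \<Longrightarrow> (\<Sum>k. c k * complex_of_real t ^ k) = 0"
  shows "c n = 0"
proof (induction n rule: less_induct)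
  case (less n)
  define h where "h z = (\<Sum>k. c (k + n) * z ^ k)" for z :: complex
  have sh: "summable (\<lambda>k. c (k + n) * z ^ k)" for z
  proof (cases "z = 0")
    case True then show ?thesis by simp
  next
    case False
    have "summable (\<lambda>k. c (k + n) * z ^ (k + n))"
      using summ[of z] by (subst summable_iff_shift) 
    then have "summable (\<lambda>k. (c (k + n) * z ^ (k + n)) / z ^ n)" by (rule summable_divide)
    then show ?thesis using False by (simp add: power_add)
  qed
  have ht: "h (complex_of_real t) = 0" if t: "0 < \<bar>t\<bar>" "\<bar>t\<bar> < d" for t
  proof -
    let ?z = "complex_of_real t"
    have "0 = (\<Sum>k. c k * ?z ^ k)" using zero t by simp
    also have "\<dots> = (\<Sum>k. c (k + n) * ?z ^ (k + n)) + (\<Sum>i<n. c i * ?z ^ i)"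
      by (rule suminf_split_initial_segment[OF summ])
    also have "(\<Sum>i<n. c i * ?z ^ i) = 0" using less by simp
    also have "(\<Sum>k. c (k + n) * ?z ^ (k + n)) = ?z ^ n * h ?z"
      unfolding h_def using sh[of ?z] by (subst suminf_mult[symmetric]) (auto simp: power_add algebra_simps)
    finally show ?thesis using t by simp
  qed
  have cont: "isCont h 0"
    unfolding h_def by (rule isCont_powser[where K=1]) (use sh[of 1] in auto)
  define s where "s m = d / (real m + 2)" for m :: nat
  have s0: "s \<longlonglongrightarrow> 0"
    unfolding s_def by real_asymp
  have "(\<lambda>m. h (complex_of_real (s m))) \<longlonglongrightarrow> h (complex_of_real 0)"
    by (rule isCont_tendsto_compose[OF _ tendsto_of_real[OF s0]]) (use cont in simp)
  moreover have "h (complex_of_real (s m)) = 0" for m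
  proof (rule ht)
    show "0 < \<bar>s m\<bar>" using d by (simp add: s_def)
    show "\<bar>s m\<bar> < d" using d by (simp add: s_def field_simps add_pos_nonneg)
  qed
  ultimately have "h 0 = 0" by (simp add: LIMSEQ_const_iff)
  moreover have "h 0 = c n" unfolding h_def using powser_zero[of "\<lambda>k. c (k + n)"] by simp
  ultimately show ?case by simp
qed



lemma int_mult_bdd:
  fixes a h :: "'m \<Rightarrow> complex"
  assumes a: "integrable M a" and h: "h \<in> borel_measurable M" and B: "\<And>x. norm (h x) \<le> B"
  shows "integrable M (\<lambda>x. a x * h x)"
proof -
  have i: "integrable M (\<lambda>x. B *\<^sub>R a x)" using a by auto
  have m: "(\<lambda>x. a x * h x) \<in> borel_measurable M" using a h by measurable
  have "B \<ge> 0" using B[of undefined] norm_ge_zero[of "h undefined"] by linarith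
  have "AE x in M. norm (a x * h x) \<le> norm (B *\<^sub>R a x)"
  proof (intro AE_I2)
    fix x
    have "norm (a x) * norm (h x) \<le> norm (a x) * B" using B by (intro mult_left_mono) auto
    then show "norm (a x * h x) \<le> norm (B *\<^sub>R a x)" using \<open>B \<ge> 0\<close> by (simp add: norm_mult mult.commute)
  qed
  from Bochner_Integration.integrable_bound[OF i m this] show ?thesis .
qed

definition tp :: "(complex \<times> 'a) list \<Rightarrow> 'a::real_inner \<Rightarrow> complex" where
  "tp L x = (\<Sum>(c,z)\<leftarrow>L. c * cis (x \<bullet> z))"

lemma tp_simps[simp]: "tp [] x = 0" "tp ((c,z)#L) x = c * cis (x \<bullet> z) + tp L x"
  "tp (L1 @ L2) x = tp L1 x + tp L2 x"
  by (simp_all add: tp_def)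

lemma tp_shift: "tp (map (\<lambda>(d,w). (c*d, z+w)) L) x = c * cis (x \<bullet> z) * tp L x"
  by (induction L) (auto simp: algebra_simps inner_add_right cis_mult)

definition tpmul :: "(complex \<times> 'a) list \<Rightarrow> (complex \<times> 'a::real_inner) list \<Rightarrow> (complex \<times> 'a) list" where
  "tpmul L1 L2 = concat (map (\<lambda>(c,z). map (\<lambda>(d,w). (c*d, z+w)) L2) L1)"

lemma tp_mult: "tp (tpmul L1 L2) x = tp L1 x * tp L2 x"
  by (induction L1) (auto simp: tpmul_def tp_shift algebra_simps)

lemma tp_cnj: "tp (map (\<lambda>(c,z). (cnj c, -z)) L) x = cnj (tp L x)"
  by (induction L) (auto simp: cis_cnj)

lemma tp_scale: "tp (map (\<lambda>(c,z). (k*c, z)) L) x = k * tp L x"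
  by (induction L) (auto simp: algebra_simps)

lemma tp_cont: "continuous_on UNIV (tp L)"
proof (induction L)
  case Nil then show ?case by (simp add: tp_def[abs_def])
next
  case (Cons p L)
  obtain c z where p: "p = (c,z)" by (cases p)
  have "tp (p#L) = (\<lambda>x. c * cis (x \<bullet> z) + tp L x)" using p by auto
  then show ?case using Cons by (auto intro!: continuous_intros)
qed

lemma tp_bound: "norm (tp L x) \<le> (\<Sum>(c,z)\<leftarrow>L. norm c)"
proof (induction L)
  case (Cons p L)
  obtain c z where p: "p = (c,z)" by (cases p)
  have "norm (tp (p#L) x) \<le> norm (c * cis (x \<bullet> z)) + norm (tp L x)"
    using p norm_triangle_ineq by auto
  also have "\<dots> \<le> norm c + (\<Sum>(c,z)\<leftarrow>L. norm c)" using Cons by (simp add: norm_mult)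
  finally show ?case using p by simp
qed simp

lemma tp_meas: "tp L \<in> borel_measurable borel"
  using tp_cont by (rule borel_measurable_continuous_onI)

lemma tp_integral:
  fixes a :: "'a::euclidean_space \<Rightarrow> complex"
  assumes a: "integrable lborel a"
  and F: "\<forall>\<zeta>. (LINT x|lborel. a x * cis (x \<bullet> \<zeta>)) = 0"
  shows "(LINT x|lborel. a x * tp L x) = 0"
proof (induction L)
  case Nil then show ?case by simp
next
  case (Cons p L)
  obtain c z where p: "p = (c,z)" by (cases p)
  have i1: "integrable lborel (\<lambda>x. a x * cis (x \<bullet> z))"
  proof (rule int_mult_bdd[OF a, where B=1])
    have "continuous_on UNIV (\<lambda>x::'a. cis (x \<bullet> z))" by (intro continuous_intros)
    then show "(\<lambda>x::'a. cis (x \<bullet> z)) \<in> borel_measurable lborel"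
      using borel_measurable_continuous_onI by auto
  qed auto
  have i2: "integrable lborel (\<lambda>x. a x * tp L x)"
    using tp_meas[of L] by (intro int_mult_bdd[OF a _ tp_bound]) simp
  have "(LINT x|lborel. a x * tp (p#L) x) = (LINT x|lborel. c * (a x * cis (x \<bullet> z)) + a x * tp L x)"
    using p by (auto simp: algebra_simps)
  also have "\<dots> = c * (LINT x|lborel. a x * cis (x \<bullet> z)) + (LINT x|lborel. a x * tp L x)"
    using i1 i2 by simp
  also have "\<dots> = 0" using F Cons by simp
  finally show ?case .
qed

lemma int_scaleR_bdd:
  fixes a :: "'m \<Rightarrow> complex" and h :: "'m \<Rightarrow> real"
  assumes a: "integrable M a" and h: "h \<in> borel_measurable M" and B: "\<And>x. \<bar>h x\<bar> \<le> B"
  shows "integrable M (\<lambda>x. h x *\<^sub>R a x)"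
proof -
  have "integrable M (\<lambda>x. a x * complex_of_real (h x))"
    using h B by (intro int_mult_bdd[OF a]) auto
  then show ?thesis by (simp add: scaleR_conv_of_real mult.commute)
qed

lemma tp_Re_integral:
  fixes a :: "'a::euclidean_space \<Rightarrow> complex"
  assumes a: "integrable lborel a"
  and F: "\<forall>\<zeta>. (LINT x|lborel. a x * cis (x \<bullet> \<zeta>)) = 0"
  shows "(LINT x|lborel. Re (tp L x) *\<^sub>R a x) = 0"
proof -
  define L' where "L' = map (\<lambda>(c,z). ((1/2) * c, z)) (L @ map (\<lambda>(c,z). (cnj c, -z)) L)"
  have "tp L' x = complex_of_real (Re (tp L x))" for x
    unfolding L'_def tp_scale tp_simps tp_cnj complex_add_cnj by simp
  then have "(\<lambda>x. Re (tp L x) *\<^sub>R a x) = (\<lambda>x. a x * tp L' x)"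
    by (auto simp: scaleR_conv_of_real)
  then show ?thesis using tp_integral[OF a F] by simp
qed

lemma fourier_zero_orth:
  fixes a :: "'a::euclidean_space \<Rightarrow> complex"
  assumes a: "integrable lborel a" and K: "compact K"
  and supp: "AE x in lborel. x \<notin> K \<longrightarrow> a x = 0"
  and F: "\<forall>\<zeta>. (LINT x|lborel. a x * cis (x \<bullet> \<zeta>)) = 0"
  shows "\<forall>f::'a\<Rightarrow>real. continuous_on UNIV f \<and> (\<forall>x. 0 \<le> f x \<and> f x \<le> 1)
      \<longrightarrow> (LINT x|lborel. f x *\<^sub>R a x) = 0"
proof (intro allI impI)
  fix f :: "'a \<Rightarrow> real" assume fa: "continuous_on UNIV f \<and> (\<forall>x. 0 \<le> f x \<and> f x \<le> 1)"
  then have cf: "continuous_on UNIV f" and f01: "\<And>x. 0 \<le> f x \<and> f x \<le> 1" by auto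
  define P where "P g \<longleftrightarrow> (\<exists>L. g = (\<lambda>x. Re (tp L x)))" for g :: "'a \<Rightarrow> real"
  have approx: "\<exists>g. P g \<and> (\<forall>x\<in>K. \<bar>f x - g x\<bar> < e)" if e: "e > 0" for e
  proof (rule Stone_Weierstrass_HOL[OF K])
    show "P (\<lambda>x. c)" for c
      unfolding P_def by (rule exI[of _ "[(complex_of_real c, 0)]"]) simp
    show "continuous_on K g" if "P g" for g
    proof -
      obtain L where "g = (\<lambda>x. Re (tp L x))" using \<open>P g\<close> P_def by auto
      moreover have "continuous_on UNIV (\<lambda>x. Re (tp L x))"
        using tp_cont[of L] by (intro continuous_intros)
      ultimately show ?thesis by (auto intro: continuous_on_subset)
    qed
    show "P (\<lambda>x. g x + h x)" if gh: "P g \<and> P h" for g h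
    proof -
      obtain L1 L2 where "g = (\<lambda>x. Re (tp L1 x))" "h = (\<lambda>x. Re (tp L2 x))" using gh P_def by auto
      then show ?thesis unfolding P_def by (intro exI[of _ "L1 @ L2"]) auto
    qed
    show "P (\<lambda>x. g x * h x)" if gh: "P g \<and> P h" for g h
    proof -
      obtain L1 L2 where g: "g = (\<lambda>x. Re (tp L1 x))" and h: "h = (\<lambda>x. Re (tp L2 x))" using gh P_def by auto
      define L where "L = map (\<lambda>(c,z). ((1/2) * c, z)) (tpmul L1 L2 @ tpmul L1 (map (\<lambda>(c,z). (cnj c, -z)) L2))"
      have "Re (tp L x) = g x * h x" for x
        unfolding L_def tp_scale tp_simps tp_mult tp_cnj g h by (simp add: field_simps)
      then show ?thesis unfolding P_def by (intro exI[of _ L]) auto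
    qed
    show "\<exists>g. P g \<and> g x \<noteq> g y" if "x \<in> K \<and> y \<in> K \<and> x \<noteq> y" for x y
    proof (rule ccontr)
      assume nex: "\<not> (\<exists>g. P g \<and> g x \<noteq> g y)"
      define d where "d = x - y"
      have "d \<noteq> 0" using that d_def by auto
      then have dd: "d \<bullet> d > 0" by simp
      define z where "z = (pi / 2 / (d \<bullet> d)) *\<^sub>R d"
      define t where "t = y \<bullet> z"
      have xz: "x \<bullet> z = t + pi / 2"
      proof -
        have "x \<bullet> z = y \<bullet> z + d \<bullet> z" by (simp add: d_def inner_diff_left)
        also have "d \<bullet> z = pi / 2" using dd by (simp add: z_def)
        finally show ?thesis by (simp add: t_def)
      qed
      have "P (\<lambda>x. Re (tp [(1, z)] x))" unfolding P_def by blast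
      with nex have e1: "Re (tp [(1, z)] x) = Re (tp [(1, z)] y)" by blast
      have "P (\<lambda>x. Re (tp [(-\<i>, z)] x))" unfolding P_def by blast
      with nex have e2: "Re (tp [(-\<i>, z)] x) = Re (tp [(-\<i>, z)] y)" by blast
      from e1 have "- sin t = cos t" by (simp add: xz t_def cos_add)
      moreover from e2 have "cos t = sin t" by (simp add: xz t_def sin_add)
      ultimately have "sin t = 0" "cos t = 0" by auto
      then show False using sin_cos_squared_add[of t] by simp
    qed
  qed (use cf e in \<open>auto intro: continuous_on_subset\<close>)
  have fi: "integrable lborel (\<lambda>x. f x *\<^sub>R a x)"
    using f01 borel_measurable_continuous_onI[OF cf] by (intro int_scaleR_bdd[OF a, where B=1]) auto
  define N where "N = (LINT x|lborel. norm (a x))"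
  have N0: "N \<ge> 0" unfolding N_def by simp
  have bnd: "norm (LINT x|lborel. f x *\<^sub>R a x) \<le> e * N" if e: "e > 0" for e
  proof -
    obtain g where "P g" and ge: "\<forall>x\<in>K. \<bar>f x - g x\<bar> < e" using approx[OF e] by blast
    then obtain L where g: "g = (\<lambda>x. Re (tp L x))" using P_def by auto
    have gi: "integrable lborel (\<lambda>x. g x *\<^sub>R a x)"
    proof (rule int_scaleR_bdd[OF a, where B="\<Sum>(c,z)\<leftarrow>L. norm c"])
      show "g \<in> borel_measurable lborel" using tp_meas[of L] unfolding g by simp
      show "\<bar>g x\<bar> \<le> (\<Sum>(c,z)\<leftarrow>L. norm c)" for x
        unfolding g using abs_Re_le_cmod[of "tp L x"] tp_bound[of L x] by linarith
    qed
    have g0: "(LINT x|lborel. g x *\<^sub>R a x) = 0" unfolding g by (rule tp_Re_integral[OF a F])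
    have "(LINT x|lborel. f x *\<^sub>R a x) = (LINT x|lborel. f x *\<^sub>R a x - g x *\<^sub>R a x)"
      using fi gi g0 by simp
    also have "norm \<dots> \<le> (LINT x|lborel. norm (f x *\<^sub>R a x - g x *\<^sub>R a x))"
      by (rule integral_norm_bound)
    also have "\<dots> \<le> (LINT x|lborel. e * norm (a x))"
    proof (rule integral_mono_AE)
      show "integrable lborel (\<lambda>x. norm (f x *\<^sub>R a x - g x *\<^sub>R a x))" using fi gi by auto
      show "integrable lborel (\<lambda>x. e * norm (a x))" using a by auto
      show "AE x in lborel. norm (f x *\<^sub>R a x - g x *\<^sub>R a x) \<le> e * norm (a x)"
        using supp
      proof eventually_elim
        case (elim x)
        show ?case
        proof (cases "x \<in> K")
          case True
          have "norm (f x *\<^sub>R a x - g x *\<^sub>R a x) = \<bar>f x - g x\<bar> * norm (a x)"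
            by (simp add: scaleR_diff_left[symmetric])
          also have "\<dots> \<le> e * norm (a x)" using ge True by (intro mult_right_mono) auto
          finally show ?thesis .
        qed (use elim in simp)
      qed
    qed
    also have "\<dots> = e * N" unfolding N_def by simp
    finally show ?thesis .
  qed
  show "(LINT x|lborel. f x *\<^sub>R a x) = 0"
  proof (rule ccontr)
    assume ne: "(LINT x|lborel. f x *\<^sub>R a x) \<noteq> 0"
    define n where "n = norm (LINT x|lborel. f x *\<^sub>R a x)"
    have n0: "n > 0" using ne n_def by simp
    have "n \<le> (n / (N + 1)) * N" using bnd[of "n / (N+1)"] n0 N0 n_def by simp
    also have "\<dots> < n" using n0 N0 by (simp add: field_simps)
    finally show False by simp
  qed
qed



lemma open_orth:
  fixes b :: "'a::euclidean_space \<Rightarrow> complex"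
  assumes b: "integrable lborel b"
  and orth: "\<forall>f::'a\<Rightarrow>real. continuous_on UNIV f \<and> (\<forall>x. 0 \<le> f x \<and> f x \<le> 1)
      \<longrightarrow> (LINT x|lborel. f x *\<^sub>R b x) = 0"
  and U: "open U"
  shows "(LINT x|lborel. indicator U x *\<^sub>R b x) = 0"
proof (cases "U = UNIV")
  case True
  then show ?thesis using orth by (auto dest!: spec[of _ "\<lambda>_. 1"])
next
  case False
  define f where "f n x = min 1 (real n * infdist x (-U))" for n :: nat and x
  have cf: "continuous_on UNIV (f n)" for n
    unfolding f_def by (intro continuous_intros)
  have lim: "(\<lambda>n. f n x *\<^sub>R b x) \<longlonglongrightarrow> indicator U x *\<^sub>R b x" for x
  proof (cases "x \<in> U")
    case True
    have pos: "infdist x (-U) > 0"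
      using False True U by (intro infdist_pos_not_in_closed) auto
    obtain N :: nat where N: "N > 1 / infdist x (-U)" using reals_Archimedean2 by blast
    have "eventually (\<lambda>n. f n x *\<^sub>R b x = indicator U x *\<^sub>R b x) sequentially"
    proof (rule eventually_sequentiallyI[of N])
      fix n assume "N \<le> n"
      then have "real n * infdist x (-U) \<ge> 1"
        using N pos by (smt (verit, ccfv_SIG) divide_less_eq of_nat_le_iff mult_right_mono)
      then show "f n x *\<^sub>R b x = indicator U x *\<^sub>R b x" using True by (simp add: f_def)
    qed
    then show ?thesis by (rule tendsto_eventually)
  next
    case False
    then show ?thesis by (simp add: f_def)
  qed
  have "(\<lambda>n. LINT x|lborel. f n x *\<^sub>R b x) \<longlonglongrightarrow> (LINT x|lborel. indicator U x *\<^sub>R b x)"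
  proof (rule integral_dominated_convergence[where w="\<lambda>x. norm (b x)"])
    show "(\<lambda>x. indicat_real U x *\<^sub>R b x) \<in> borel_measurable lborel"
      using U b by (intro borel_measurable_scaleR borel_measurable_indicator) auto
    show "(\<lambda>x. f n x *\<^sub>R b x) \<in> borel_measurable lborel" for n
      by (rule borel_measurable_scaleR) (use borel_measurable_continuous_onI[OF cf[of n]] b in auto)
    show "integrable lborel (\<lambda>x. norm (b x))" using b by auto
    show "AE x in lborel. (\<lambda>n. f n x *\<^sub>R b x) \<longlonglongrightarrow> indicat_real U x *\<^sub>R b x"
      using lim by auto
    show "AE x in lborel. norm (f n x *\<^sub>R b x) \<le> norm (b x)" for n
      by (auto simp: f_def infdist_nonneg intro!: mult_left_le_one_le)
  qed
  moreover have "(LINT x|lborel. f n x *\<^sub>R b x) = 0" for n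
    using orth cf[of n] by (auto simp: f_def infdist_nonneg)
  ultimately show ?thesis by (simp add: LIMSEQ_const_iff)
qed

lemma ae_zero_if_cont_orth:
  fixes b :: "'a::euclidean_space \<Rightarrow> complex"
  assumes b: "integrable lborel b"
  and orth: "\<forall>f::'a\<Rightarrow>real. continuous_on UNIV f \<and> (\<forall>x. 0 \<le> f x \<and> f x \<le> 1)
      \<longrightarrow> (LINT x|lborel. f x *\<^sub>R b x) = 0"
  shows "AE x in lborel. b x = 0"
proof (rule sigma_finite_measure.density_zero[OF sigma_finite_lborel b])
  fix A :: "'a set" assume A: "A \<in> sets lborel"
  have sA: "A \<in> sigma_sets UNIV {S. open S}"
    using A by (simp add: borel_def sets_measure_of)
  have Ist: "Int_stable {S::'a set. open S}" by (auto simp: Int_stable_def)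
  show "set_lebesgue_integral lborel A b = 0"
  proof (rule sigma_sets_induct_disjoint[where P="\<lambda>A. set_lebesgue_integral lborel A b = 0", OF Ist _ sA])
    fix A :: "'a set" assume "A \<in> {S. open S}"
    then have "open A" by simp
    from open_orth[OF b orth this] show "set_lebesgue_integral lborel A b = 0" by (simp add: set_lebesgue_integral_def)
  next
    show "set_lebesgue_integral lborel {} b = 0" by (simp add: set_lebesgue_integral_def)
  next
    fix A :: "'a set" assume compl: "A \<in> sigma_sets UNIV {S. open S}" "set_lebesgue_integral lborel A b = 0"
    have As: "A \<in> sets lborel" using compl(1) by (simp add: borel_def sets_measure_of)
    have "(LINT x|lborel. indicator (UNIV - A) x *\<^sub>R b x)
        = (LINT x|lborel. indicator UNIV x *\<^sub>R b x - indicator A x *\<^sub>R b x)"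
      by (intro Bochner_Integration.integral_cong) (auto simp: indicator_def)
    also have "\<dots> = (LINT x|lborel. indicator UNIV x *\<^sub>R b x) - (LINT x|lborel. indicator A x *\<^sub>R b x)"
      using As b by (intro Bochner_Integration.integral_diff integrable_mult_indicator) auto
    also have "\<dots> = 0"
      using open_orth[OF b orth open_UNIV] compl(2) by (simp add: set_lebesgue_integral_def)
    finally show "set_lebesgue_integral lborel (UNIV - A) b = 0" by (simp add: set_lebesgue_integral_def)
  next
    fix A :: "nat \<Rightarrow> 'a set" assume union: "disjoint_family A" "range A \<subseteq> sigma_sets UNIV {S. open S}"
       "\<And>i. set_lebesgue_integral lborel (A i) b = 0"
    have As: "A i \<in> sets lborel" for i
    proof -
      have "A i \<in> sigma_sets UNIV {S. open S}" using union(2) by blast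
      then show ?thesis by (simp add: borel_def sets_measure_of)
    qed
    have AU: "(\<Union>i. A i) \<in> sets lborel" using As by (simp add: sets.countable_UN')
    have "set_lebesgue_integral lborel (\<Union>i. A i) b = (\<Sum>i. set_lebesgue_integral lborel (A i) b)"
    proof (rule lebesgue_integral_countable_add)
      show "A i \<inter> A j = {}" if "i \<noteq> j" for i j using union(1) that by (auto simp: disjoint_family_on_def)
      show "set_integrable lborel (\<Union>i. A i) b"
        unfolding set_integrable_def using AU b by (rule integrable_mult_indicator)
    qed (rule As)
    then show "set_lebesgue_integral lborel (\<Union>i. A i) b = 0" using union(3) by simp
  qed simp
qed



lemma exp_bound_summable:
  fixes C B :: real
  shows "summable (\<lambda>k. C * (B ^ k / fact k))"
  using summable_exp[of B] by (intro summable_mult) (simp add: field_simps)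

lemma fourier_extend:
  fixes a :: "'a::euclidean_space \<Rightarrow> complex"
  assumes a: "integrable lborel a" and K: "compact K"
  and supp: "AE x in lborel. x \<notin> K \<longrightarrow> a x = 0"
  and r: "r > 0" and Z: "\<forall>\<zeta>. norm \<zeta> < r \<longrightarrow> (LINT x|lborel. a x * cis (x \<bullet> \<zeta>)) = 0"
  shows "(LINT x|lborel. a x * cis (x \<bullet> \<zeta>)) = 0"
proof -
  obtain R where R: "R > 0" "\<And>x. x \<in> K \<Longrightarrow> norm x \<le> R"
    using compact_imp_bounded[OF K] unfolding bounded_pos by auto
  define B where "B = R * norm \<zeta>"
  have B0: "B \<ge> 0" using R by (simp add: B_def)
  define N where "N = (LINT x|lborel. norm (a x))"
  have N0: "N \<ge> 0" unfolding N_def by simp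
  define m where "m k x = a x * ((\<i> * complex_of_real (x \<bullet> \<zeta>)) ^ k /\<^sub>R fact k)" for k x
  define c where "c k = (LINT x|lborel. m k x)" for k
  have mnorm: "norm (m k x) = norm (a x) * (\<bar>x \<bullet> \<zeta>\<bar> ^ k / fact k)" for k x
    by (simp add: m_def norm_mult norm_power field_simps)
  have mbound: "AE x in lborel. norm (m k x) \<le> norm (a x) * (B ^ k / fact k)" for k
    using supp
  proof eventually_elim
    case (elim x)
    show ?case
    proof (cases "x \<in> K")
      case True
      have "\<bar>x \<bullet> \<zeta>\<bar> \<le> B"
        using Cauchy_Schwarz_ineq2[of x \<zeta>] R(2)[OF True] unfolding B_def
        by (meson mult_right_mono norm_ge_zero order_trans)
      then have "\<bar>x \<bullet> \<zeta>\<bar> ^ k \<le> B ^ k" by (intro power_mono) auto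
      then show ?thesis unfolding mnorm
        by (intro mult_left_mono divide_right_mono) auto
    qed (use elim in \<open>simp add: m_def\<close>)
  qed
  have mmeas: "m k \<in> borel_measurable lborel" for k
  proof -
    have "continuous_on UNIV (\<lambda>x::'a. (\<i> * complex_of_real (x \<bullet> \<zeta>)) ^ k /\<^sub>R fact k)"
      by (intro continuous_intros)
    then have "(\<lambda>x::'a. (\<i> * complex_of_real (x \<bullet> \<zeta>)) ^ k /\<^sub>R fact k) \<in> borel_measurable lborel"
      using borel_measurable_continuous_onI by simp
    then show ?thesis unfolding m_def using a by measurable
  qed
  have mint: "integrable lborel (m k)" for k
  proof -
    have i: "integrable lborel (\<lambda>x. (B ^ k / fact k) *\<^sub>R a x)" using a by auto
    have "AE x in lborel. norm (m k x) \<le> norm ((B ^ k / fact k) *\<^sub>R a x)"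
      using mbound[of k] by eventually_elim (use B0 in \<open>simp add: mult.commute\<close>)
    from Bochner_Integration.integrable_bound[OF i mmeas this] show ?thesis .
  qed
  have cbound: "norm (c k) \<le> N * (B ^ k / fact k)" for k
  proof -
    have "norm (c k) \<le> (LINT x|lborel. norm (m k x))" unfolding c_def by (rule integral_norm_bound)
    also have "\<dots> \<le> (LINT x|lborel. norm (a x) * (B ^ k / fact k))"
      using mint a mbound by (intro integral_mono_AE) auto
    also have "\<dots> = N * (B ^ k / fact k)" unfolding N_def by simp
    finally show ?thesis .
  qed
  have csumm: "summable (\<lambda>k. c k * z ^ k)" for z
  proof (rule summable_comparison_test')
    show "summable (\<lambda>k. N * ((B * norm z) ^ k / fact k))" by (rule exp_bound_summable)
    show "norm (c k * z ^ k) \<le> N * ((B * norm z) ^ k / fact k)" for k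
    proof -
      have "norm (c k * z ^ k) = norm (c k) * norm z ^ k" by (simp add: norm_mult norm_power)
      also have "\<dots> \<le> N * (B ^ k / fact k) * norm z ^ k" by (intro mult_right_mono cbound) auto
      also have "\<dots> = N * ((B * norm z) ^ k / fact k)" by (simp add: power_mult_distrib)
      finally show ?thesis .
    qed
  qed
  have series: "(\<lambda>k. c k * complex_of_real t ^ k) sums (LINT x|lborel. a x * cis (x \<bullet> (t *\<^sub>R \<zeta>)))" for t
  proof -
    define f where "f k x = complex_of_real t ^ k * m k x" for k x
    have fsum: "(\<lambda>k. f k x) sums (a x * cis (x \<bullet> (t *\<^sub>R \<zeta>)))" for x
    proof -
      have "(\<lambda>k. (\<i> * complex_of_real (t * (x \<bullet> \<zeta>))) ^ k /\<^sub>R fact k) sums exp (\<i> * complex_of_real (t * (x \<bullet> \<zeta>)))"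
        by (rule exp_converges)
      then have "(\<lambda>k. a x * ((\<i> * complex_of_real (t * (x \<bullet> \<zeta>))) ^ k /\<^sub>R fact k)) sums (a x * exp (\<i> * complex_of_real (t * (x \<bullet> \<zeta>))))"
        by (rule sums_mult)
      moreover have "a x * ((\<i> * complex_of_real (t * (x \<bullet> \<zeta>))) ^ k /\<^sub>R fact k) = f k x" for k
        by (simp add: f_def m_def power_mult_distrib algebra_simps)
      moreover have "exp (\<i> * complex_of_real (t * (x \<bullet> \<zeta>))) = cis (x \<bullet> (t *\<^sub>R \<zeta>))"
        by (simp add: cis_conv_exp)
      ultimately show ?thesis by simp
    qed
    have fint: "integrable lborel (f k)" for k unfolding f_def using mint[of k] by simp
    have fnorm: "norm (f k x) = norm (a x) * (\<bar>t * (x \<bullet> \<zeta>)\<bar> ^ k / fact k)" for k x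
      by (simp add: f_def mnorm norm_mult norm_power abs_mult power_mult_distrib)
    have "(\<lambda>k. LINT x|lborel. f k x) sums (LINT x|lborel. (\<Sum>k. f k x))"
    proof (rule sums_integral)
      show "integrable lborel (f k)" for k by (rule fint)
      show "AE x in lborel. summable (\<lambda>k. norm (f k x))"
        unfolding fnorm by (intro AE_I2 exp_bound_summable)
      show "summable (\<lambda>k. LINT x|lborel. norm (f k x))"
      proof (rule summable_comparison_test')
        show "summable (\<lambda>k. N * ((\<bar>t\<bar> * B) ^ k / fact k))" by (rule exp_bound_summable)
        show "norm (LINT x|lborel. norm (f k x)) \<le> N * ((\<bar>t\<bar> * B) ^ k / fact k)" for k
        proof -
          have "norm (LINT x|lborel. norm (f k x)) = (LINT x|lborel. \<bar>t\<bar> ^ k * norm (m k x))"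
            by (simp add: f_def norm_mult norm_power)
          also have "\<dots> = \<bar>t\<bar> ^ k * (LINT x|lborel. norm (m k x))" by simp
          also have "\<dots> \<le> \<bar>t\<bar> ^ k * (LINT x|lborel. norm (a x) * (B ^ k / fact k))"
            using mint a mbound by (intro mult_left_mono integral_mono_AE) auto
          also have "\<dots> = N * ((\<bar>t\<bar> * B) ^ k / fact k)" unfolding N_def by (simp add: power_mult_distrib)
          finally show ?thesis .
        qed
      qed
    qed
    moreover have "(LINT x|lborel. f k x) = c k * complex_of_real t ^ k" for k
      by (simp add: f_def c_def mult.commute)
    moreover have "(\<lambda>x. \<Sum>k. f k x) = (\<lambda>x. a x * cis (x \<bullet> (t *\<^sub>R \<zeta>)))"
      using fsum by (auto simp: sums_iff)
    ultimately show ?thesis by simp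
  qed
  define d where "d = r / (norm \<zeta> + 1)"
  have d: "d > 0" using r by (simp add: d_def add_nonneg_pos)
  have c0: "c k = 0" for k
  proof (rule powser_coeffs_zero[OF csumm d])
    fix t :: real assume t: "\<bar>t\<bar> < d"
    have "norm (t *\<^sub>R \<zeta>) = \<bar>t\<bar> * norm \<zeta>" by simp
    also have "\<dots> \<le> \<bar>t\<bar> * (norm \<zeta> + 1)" by (intro mult_left_mono) auto
    also have "\<dots> < d * (norm \<zeta> + 1)" using t by (intro mult_strict_right_mono) (auto intro: add_nonneg_pos)
    also have "\<dots> = r" proof - have "norm \<zeta> + 1 \<noteq> 0" using norm_ge_zero[of \<zeta>] by linarith then show ?thesis by (simp add: d_def) qed
    finally have "norm (t *\<^sub>R \<zeta>) < r" . then have "(LINT x|lborel. a x * cis (x \<bullet> (t *\<^sub>R \<zeta>))) = 0" using Z by blast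
    then show "(\<Sum>k. c k * complex_of_real t ^ k) = 0" using series[of t] by (simp add: sums_iff)
  qed
  show ?thesis using series[of 1] c0 by (simp add: sums_iff)
qed



abbreviation "B0 \<equiv> ball (0::'a::euclidean_space) 1 - {0}"

lemma e_meas[measurable]: "(\<lambda>x::'a::euclidean_space. x /\<^sub>R norm x) \<in> borel_measurable borel"
  by measurable

lemma B0_sets[measurable]: "B0 \<in> sets (borel :: 'a::euclidean_space measure)"
  by (intro sets.Diff borel_open borel_closed) auto

lemma comp_e_meas: "g \<in> borel_measurable borel \<Longrightarrow> (\<lambda>y::'a::euclidean_space. g (y /\<^sub>R norm y)) \<in> borel_measurable borel"
  using measurable_compose[OF e_meas] by blast

lemma e_meas_restr: "(\<lambda>x::'a::euclidean_space. x /\<^sub>R norm x) \<in>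
   measurable (restrict_space lborel B0) (restrict_space borel (sphere 0 1))"
proof (rule measurable_restrict_space2)
  show "(\<lambda>x::'a. x /\<^sub>R norm x) \<in> space (restrict_space lborel B0) \<rightarrow> sphere 0 1"
    by (auto simp: space_restrict_space)
  show "(\<lambda>x::'a. x /\<^sub>R norm x) \<in> measurable (restrict_space lborel B0) borel"
    by (rule measurable_restrict_space1) simp
qed

lemma sets_ssm: "sets (sphere_surface_measure :: 'a::euclidean_space measure) = sets (restrict_space borel (sphere (0::'a) 1))"
  unfolding sphere_surface_measure_def by simp

lemma meas_ssm: "g \<in> borel_measurable borel \<Longrightarrow> g \<in> borel_measurable (sphere_surface_measure :: 'a::euclidean_space measure)"
  by (subst measurable_cong_sets[OF sets_ssm refl]) (rule measurable_restrict_space1)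

lemma sphere_integral:
  fixes g :: "'a::euclidean_space \<Rightarrow> complex"
  assumes g: "g \<in> borel_measurable borel"
  shows "integral\<^sup>L sphere_surface_measure g =
    (LINT y|lborel. (real DIM('a) * indicator B0 y) *\<^sub>R g (y /\<^sub>R norm y))"
proof -
  have gr: "g \<in> borel_measurable (restrict_space borel (sphere (0::'a) 1))"
    using g by (rule measurable_restrict_space1)
  have "integral\<^sup>L (sphere_surface_measure :: 'a measure) g =
      integral\<^sup>L (distr (restrict_space lborel B0) (restrict_space borel (sphere 0 1)) (\<lambda>x. x /\<^sub>R norm x))
        (\<lambda>x. real DIM('a) *\<^sub>R g x)"
    unfolding sphere_surface_measure_def
    by (rule integral_density) (use gr in auto)
  also have "\<dots> = integral\<^sup>L (restrict_space lborel B0) (\<lambda>y. real DIM('a) *\<^sub>R g (y /\<^sub>R norm y))"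
    by (rule integral_distr[OF e_meas_restr]) (use gr in auto)
  also have "\<dots> = (LINT y|lborel. indicator B0 y *\<^sub>R (real DIM('a) *\<^sub>R g (y /\<^sub>R norm y)))"
    by (rule integral_restrict_space) auto
  finally show ?thesis by (simp add: mult.commute)
qed

lemma sphere_integrable:
  fixes g :: "'a::euclidean_space \<Rightarrow> 'b::{banach, second_countable_topology}"
  assumes g: "g \<in> borel_measurable borel" and B: "\<And>x. norm (g x) \<le> Bd"
  shows "integrable sphere_surface_measure g"
proof -
  have gr: "g \<in> borel_measurable (restrict_space borel (sphere (0::'a) 1))"
    using g by (rule measurable_restrict_space1)
  have i: "integrable lborel (\<lambda>y::'a. (Bd * real DIM('a)) *\<^sub>R (indicator (ball 0 1) y :: real))"
  proof -
    have "integrable lborel (indicator (ball (0::'a) 1) :: 'a \<Rightarrow> real)"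
      by (rule integrable_real_indicator[OF _ emeasure_lborel_ball_finite]) auto
    then show ?thesis by (intro integrable_scaleR_right)
  qed
  have "integrable lborel (\<lambda>y. indicator B0 y *\<^sub>R (real DIM('a) *\<^sub>R g (y /\<^sub>R norm y)))"
  proof (rule Bochner_Integration.integrable_bound[OF i])
    show "(\<lambda>y. indicator B0 y *\<^sub>R (real DIM('a) *\<^sub>R g (y /\<^sub>R norm y))) \<in> borel_measurable lborel"
      using comp_e_meas[OF g] by (intro borel_measurable_scaleR borel_measurable_indicator) auto
    show "AE x in lborel. norm (indicator B0 x *\<^sub>R (real DIM('a) *\<^sub>R g (x /\<^sub>R norm x)))
        \<le> norm ((Bd * real DIM('a)) *\<^sub>R indicator (ball 0 1) x :: real)"
    proof (intro AE_I2)
      fix x :: 'a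
      have "0 \<le> Bd" using B[of x] norm_ge_zero[of "g x"] by linarith
      show "norm (indicator B0 x *\<^sub>R (real DIM('a) *\<^sub>R g (x /\<^sub>R norm x)))
        \<le> norm ((Bd * real DIM('a)) *\<^sub>R indicator (ball 0 1) x :: real)"
        using B[of "x /\<^sub>R norm x"] \<open>0 \<le> Bd\<close>
        by (auto simp: indicator_def abs_mult mult.commute intro!: mult_left_mono)
    qed
  qed
  then have "integrable (restrict_space lborel B0) (\<lambda>y. real DIM('a) *\<^sub>R g (y /\<^sub>R norm y))"
    by (subst integrable_restrict_space) auto
  then have "integrable (distr (restrict_space lborel B0) (restrict_space borel (sphere 0 1)) (\<lambda>x. x /\<^sub>R norm x))
        (\<lambda>x. real DIM('a) *\<^sub>R g x)"
    by (subst integrable_distr_eq[OF e_meas_restr]) (use gr in auto)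
  then show ?thesis
    unfolding sphere_surface_measure_def
    by (subst integrable_density) (use gr in auto)
qed

lemma indicator_L2:
  assumes C: "C \<in> sets borel"
  shows "(indicator C :: 'a::euclidean_space \<Rightarrow> complex) \<in> L2_sphere"
  unfolding L2_sphere_def
proof (intro CollectI conjI)
  show "(indicator C :: 'a \<Rightarrow> complex) \<in> borel_measurable sphere_surface_measure"
    using C by (intro meas_ssm) auto
  show "integrable sphere_surface_measure (\<lambda>\<xi>. (norm (indicator C \<xi> :: complex))\<^sup>2)"
    using C by (intro sphere_integrable[where Bd=1]) (auto simp: indicator_def)
qed

definition pC :: "'a set \<Rightarrow> 'a::euclidean_space \<Rightarrow> real" where
  "pC C y = indicator B0 y * indicator C (y /\<^sub>R norm y)"

lemma herglotz_indicator:
  fixes C :: "'a::euclidean_space set"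
  assumes C: "C \<in> sets borel"
  shows "herglotz_op (indicator C) x = complex_of_real (herglotz_const DIM('a) * real DIM('a)) *
     (LINT y|lborel. pC C y *\<^sub>R cis (x \<bullet> (y /\<^sub>R norm y)))"
proof -
  have "integral\<^sup>L sphere_surface_measure (\<lambda>\<xi>::'a. indicator C \<xi> * cis (x \<bullet> \<xi>)) =
      (LINT y|lborel. (real DIM('a) * indicator B0 y) *\<^sub>R (indicator C (y /\<^sub>R norm y) * cis (x \<bullet> (y /\<^sub>R norm y))))"
  proof (intro sphere_integral borel_measurable_times)
    show "(indicator C :: 'a \<Rightarrow> complex) \<in> borel_measurable borel" using C by simp
    have "continuous_on UNIV (\<lambda>\<xi>::'a. cis (x \<bullet> \<xi>))" by (intro continuous_intros)
    then show "(\<lambda>\<xi>::'a. cis (x \<bullet> \<xi>)) \<in> borel_measurable borel" by (rule borel_measurable_continuous_onI)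
  qed
  also have "\<dots> = (LINT y|lborel. complex_of_real (real DIM('a)) * (pC C y *\<^sub>R cis (x \<bullet> (y /\<^sub>R norm y))))"
    by (intro Bochner_Integration.integral_cong refl) (auto simp: pC_def scaleR_conv_of_real indicator_def)
  also have "\<dots> = complex_of_real (real DIM('a)) * (LINT y|lborel. pC C y *\<^sub>R cis (x \<bullet> (y /\<^sub>R norm y)))"
    by (rule integral_mult_right_zero)
  finally show ?thesis unfolding herglotz_op_def by simp
qed



lemma cis_meas[measurable]: "f \<in> borel_measurable M \<Longrightarrow> (\<lambda>x. cis (f x :: real)) \<in> borel_measurable M"
proof -
  have "continuous_on UNIV cis" by (intro continuous_intros)
  then have "cis \<in> borel_measurable borel" by (rule borel_measurable_continuous_onI)
  then show "f \<in> borel_measurable M \<Longrightarrow> (\<lambda>x. cis (f x :: real)) \<in> borel_measurable M"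
    using measurable_compose by blast
qed

lemma fub_cis:
  fixes b :: "'a::euclidean_space \<Rightarrow> complex" and p :: "'a \<Rightarrow> real" and W :: "'a \<Rightarrow> 'a"
  assumes b: "integrable lborel b" and p: "integrable lborel p" and W[measurable]: "W \<in> borel_measurable borel"
  shows "(LINT x|lborel. b x * (LINT y|lborel. p y *\<^sub>R cis (\<sigma> * (x \<bullet> W y)))) =
         (LINT y|lborel. p y *\<^sub>R (LINT x|lborel. b x * cis (\<sigma> * (x \<bullet> W y))))"
proof -
  have bm[measurable]: "b \<in> borel_measurable lborel" using b by auto
  have pm[measurable]: "p \<in> borel_measurable lborel" using p by auto
  define f where "f x y = b x * (p y *\<^sub>R cis (\<sigma> * (x \<bullet> W y)))" for x y
  have fm: "case_prod f \<in> borel_measurable (lborel \<Otimes>\<^sub>M lborel)"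
    unfolding f_def by measurable
  have nf: "norm (f x y) = norm (b x) * \<bar>p y\<bar>" for x y by (simp add: f_def norm_mult)
  have fi: "integrable (lborel \<Otimes>\<^sub>M lborel) (case_prod f)"
  proof (rule lborel_pair.Fubini_integrable)
    show "case_prod f \<in> borel_measurable (lborel \<Otimes>\<^sub>M lborel)" by (rule fm)
    show "integrable lborel (\<lambda>x. LINT y|lborel. norm (case_prod f (x, y)))"
      using b p by (simp add: nf)
    show "AE x in lborel. integrable lborel (\<lambda>y. case_prod f (x, y))"
    proof (intro AE_I2)
      fix x
      have i: "integrable lborel (\<lambda>y. norm (b x) *\<^sub>R p y)" using p by auto
      show "integrable lborel (\<lambda>y. case_prod f (x, y))"
        by (rule Bochner_Integration.integrable_bound[OF i]) (auto simp: f_def norm_mult abs_mult)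
    qed
  qed
  have "(LINT x|lborel. LINT y|lborel. f x y) = (LINT y|lborel. LINT x|lborel. f x y)"
    using lborel_pair.Fubini_integral[OF fi] by simp
  moreover have "(LINT y|lborel. f x y) = b x * (LINT y|lborel. p y *\<^sub>R cis (\<sigma> * (x \<bullet> W y)))" for x
    unfolding f_def by (rule integral_mult_right_zero)
  moreover have "(LINT x|lborel. f x y) = p y *\<^sub>R (LINT x|lborel. b x * cis (\<sigma> * (x \<bullet> W y)))" for y
  proof -
    have "(LINT x|lborel. f x y) = (LINT x|lborel. p y *\<^sub>R (b x * cis (\<sigma> * (x \<bullet> W y))))"
      unfolding f_def by (intro Bochner_Integration.integral_cong) (auto simp: scaleR_conv_of_real algebra_simps)
    then show ?thesis by simp
  qed
  ultimately show ?thesis by simp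
qed



lemma G_cont:
  fixes a :: "'a::euclidean_space \<Rightarrow> complex"
  assumes a: "integrable lborel a"
  shows "continuous_on UNIV (\<lambda>\<zeta>. LINT x|lborel. a x * cis (x \<bullet> \<zeta>))"
proof (rule continuous_on_sequentiallyI)
  fix u :: "nat \<Rightarrow> 'a" and z assume u: "u \<longlonglongrightarrow> z"
  show "(\<lambda>n. LINT x|lborel. a x * cis (x \<bullet> u n)) \<longlonglongrightarrow> (LINT x|lborel. a x * cis (x \<bullet> z))"
  proof (rule integral_dominated_convergence[where w="\<lambda>x. norm (a x)"])
    have am[measurable]: "a \<in> borel_measurable lborel" using a by auto
    show "(\<lambda>x. a x * cis (x \<bullet> z)) \<in> borel_measurable lborel" by measurable
    show "(\<lambda>x. a x * cis (x \<bullet> u n)) \<in> borel_measurable lborel" for n by measurable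
    show "integrable lborel (\<lambda>x. norm (a x))" using a by auto
    show "AE x in lborel. (\<lambda>n. a x * cis (x \<bullet> u n)) \<longlonglongrightarrow> a x * cis (x \<bullet> z)"
    proof (intro AE_I2 tendsto_mult tendsto_const)
      fix x
      show "(\<lambda>n. cis (x \<bullet> u n)) \<longlonglongrightarrow> cis (x \<bullet> z)" using u by (intro tendsto_intros)
    qed
    show "AE x in lborel. norm (a x * cis (x \<bullet> u n)) \<le> norm (a x)" for n
      by (simp add: norm_mult)
  qed
qed

lemma G_bound:
  fixes a :: "'a::euclidean_space \<Rightarrow> complex"
  shows "norm (LINT x|lborel. a x * cis (x \<bullet> \<zeta>)) \<le> (LINT x|lborel. norm (a x))"
proof -
  have "norm (LINT x|lborel. a x * cis (x \<bullet> \<zeta>)) \<le> (LINT x|lborel. norm (a x * cis (x \<bullet> \<zeta>)))"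
    by (rule integral_norm_bound)
  then show ?thesis by (simp add: norm_mult)
qed

lemma pC_meas[measurable]: "C \<in> sets borel \<Longrightarrow> pC C \<in> borel_measurable borel"
  unfolding pC_def[abs_def]
  using comp_e_meas[of "indicator C :: 'a::euclidean_space \<Rightarrow> real"]
  by (intro borel_measurable_times borel_measurable_indicator) auto

lemma pC_nonneg: "pC C y \<ge> 0" and pC_le1: "pC C y \<le> 1"
  by (auto simp: pC_def indicator_def)

lemma pC_integrable: "C \<in> sets borel \<Longrightarrow> integrable lborel (pC (C::'a::euclidean_space set))"
proof -
  assume C: "C \<in> sets borel"
  have i: "integrable lborel (indicator (ball (0::'a) 1) :: 'a \<Rightarrow> real)"
    by (rule integrable_real_indicator[OF _ emeasure_lborel_ball_finite]) auto
  show ?thesis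
    by (rule Bochner_Integration.integrable_bound[OF i]) (use C in \<open>auto simp: pC_def indicator_def\<close>)
qed

lemma herglotz_const_pos: "herglotz_const n > 0"
  unfolding herglotz_const_def by simp

lemma hyp_Phi:
  fixes a :: "'a::euclidean_space \<Rightarrow> complex"
  assumes a: "integrable lborel a"
  and H: "\<forall>u\<in>herglotz_space. \<forall>v\<in>herglotz_space. (LINT x|lborel. a x * u x * cnj (v x)) = 0"
  and C1: "C1 \<in> sets borel" and C2: "C2 \<in> sets borel"
  shows "(LINT y|lborel. pC C1 y *\<^sub>R (LINT z|lborel. pC C2 z *\<^sub>R
           (LINT x|lborel. a x * cis (x \<bullet> (y /\<^sub>R norm y - z /\<^sub>R norm z))))) = 0"
proof -
  have am[measurable]: "a \<in> borel_measurable lborel" using a by auto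
  have C1m[measurable]: "C1 \<in> sets borel" and C2m[measurable]: "C2 \<in> sets borel" using C1 C2 .
  define k where "k = complex_of_real (herglotz_const DIM('a) * real DIM('a))"
  have k0: "k \<noteq> 0" unfolding k_def using herglotz_const_pos[of "DIM('a)"] by simp
  define U where "U x = (LINT y|lborel. pC C1 y *\<^sub>R cis (x \<bullet> (y /\<^sub>R norm y)))" for x :: 'a
  define V where "V x = (LINT z|lborel. pC C2 z *\<^sub>R cis ((-1) * (x \<bullet> (z /\<^sub>R norm z))))" for x :: 'a
  define u where "u = herglotz_op (indicator C1 :: 'a \<Rightarrow> complex)"
  define v where "v = herglotz_op (indicator C2 :: 'a \<Rightarrow> complex)"
  have uH: "u \<in> herglotz_space" unfolding u_def herglotz_space_def using indicator_L2[OF C1] by blast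
  have vH: "v \<in> herglotz_space" unfolding v_def herglotz_space_def using indicator_L2[OF C2] by blast
  have ux: "u x = k * U x" for x unfolding u_def U_def k_def by (rule herglotz_indicator[OF C1])
  have vx: "cnj (v x) = k * V x" for x
  proof -
    have "cnj (v x) = cnj k * cnj (LINT z|lborel. pC C2 z *\<^sub>R cis (x \<bullet> (z /\<^sub>R norm z)))"
      unfolding v_def k_def herglotz_indicator[OF C2] by simp
    also have "cnj (LINT z|lborel. pC C2 z *\<^sub>R cis (x \<bullet> (z /\<^sub>R norm z))) = V x"
    proof -
      have "cnj (LINT z|lborel. pC C2 z *\<^sub>R cis (x \<bullet> (z /\<^sub>R norm z)))
          = (LINT z|lborel. cnj (pC C2 z *\<^sub>R cis (x \<bullet> (z /\<^sub>R norm z))))"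
        by (rule Bochner_Integration.integral_cnj[symmetric])
      also have "\<dots> = V x" unfolding V_def
        by (intro Bochner_Integration.integral_cong refl) (simp add: cis_cnj complex_cnj_scaleR)
      finally show ?thesis .
    qed
    finally show ?thesis unfolding k_def by simp
  qed
  have Vm[measurable]: "V \<in> borel_measurable lborel" unfolding V_def by measurable
  have Vb: "norm (V x) \<le> (LINT z|lborel. pC C2 z)" for x
  proof -
    have "norm (V x) \<le> (LINT z|lborel. norm (pC C2 z *\<^sub>R cis ((-1) * (x \<bullet> (z /\<^sub>R norm z)))))"
      unfolding V_def by (rule integral_norm_bound)
    moreover have "(LBINT z. \<bar>pC C2 z\<bar>) = (LBINT z. pC C2 z)" by (intro Bochner_Integration.integral_cong) (simp_all add: abs_of_nonneg pC_nonneg)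
    ultimately show ?thesis by simp
  qed
  have aV: "integrable lborel (\<lambda>x. a x * V x)" by (rule int_mult_bdd[OF a Vm Vb])
  have "0 = (LINT x|lborel. a x * u x * cnj (v x))" using H uH vH by simp
  also have "\<dots> = (LINT x|lborel. (k * k) * ((a x * V x) * U x))"
    unfolding ux vx by (simp add: algebra_simps)
  also have "\<dots> = (k * k) * (LINT x|lborel. (a x * V x) * U x)" by (rule integral_mult_right_zero)
  also have "(LINT x|lborel. (a x * V x) * U x)
      = (LINT y|lborel. pC C1 y *\<^sub>R (LINT x|lborel. (a x * V x) * cis (1 * (x \<bullet> (y /\<^sub>R norm y)))))"
    unfolding U_def using fub_cis[OF aV pC_integrable[OF C1] e_meas, of 1] by (simp only: mult_1)
  also have "\<dots> = (LINT y|lborel. pC C1 y *\<^sub>R (LINT z|lborel. pC C2 z *\<^sub>R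
           (LINT x|lborel. a x * cis (x \<bullet> (y /\<^sub>R norm y - z /\<^sub>R norm z)))))"
  proof -
    have inner: "(LINT x|lborel. (a x * V x) * cis (1 * (x \<bullet> (y /\<^sub>R norm y)))) = (LINT z|lborel. pC C2 z *\<^sub>R
           (LINT x|lborel. a x * cis (x \<bullet> (y /\<^sub>R norm y - z /\<^sub>R norm z))))" for y :: 'a
    proof -
      have ac: "integrable lborel (\<lambda>x. a x * cis (x \<bullet> (y /\<^sub>R norm y)))"
        by (rule int_mult_bdd[OF a, where B=1]) auto
      have "(LINT x|lborel. (a x * V x) * cis (1 * (x \<bullet> (y /\<^sub>R norm y))))
          = (LINT x|lborel. (a x * cis (x \<bullet> (y /\<^sub>R norm y))) * V x)"
        by (intro Bochner_Integration.integral_cong refl) (simp add: mult_ac)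
      also have "\<dots> = (LINT z|lborel. pC C2 z *\<^sub>R (LINT x|lborel. (a x * cis (x \<bullet> (y /\<^sub>R norm y))) * cis ((-1) * (x \<bullet> (z /\<^sub>R norm z)))))"
        unfolding V_def by (rule fub_cis[OF ac pC_integrable[OF C2] e_meas])
      also have "\<dots> = (LINT z|lborel. pC C2 z *\<^sub>R
             (LINT x|lborel. a x * cis (x \<bullet> (y /\<^sub>R norm y - z /\<^sub>R norm z))))"
      proof -
        have "(LINT x|lborel. (a x * cis (x \<bullet> (y /\<^sub>R norm y))) * cis ((-1) * (x \<bullet> (z /\<^sub>R norm z))))
            = (LINT x|lborel. a x * cis (x \<bullet> (y /\<^sub>R norm y - z /\<^sub>R norm z)))" for z :: 'a
        proof (intro Bochner_Integration.integral_cong refl)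
          fix x :: 'a
          have "cis (x \<bullet> (y /\<^sub>R norm y)) * cis ((-1) * (x \<bullet> (z /\<^sub>R norm z)))
              = cis (x \<bullet> (y /\<^sub>R norm y - z /\<^sub>R norm z))"
            by (simp only: cis_mult inner_diff_right) simp
          then show "(a x * cis (x \<bullet> (y /\<^sub>R norm y))) * cis ((-1) * (x \<bullet> (z /\<^sub>R norm z)))
              = a x * cis (x \<bullet> (y /\<^sub>R norm y - z /\<^sub>R norm z))"
            by (simp only: mult.assoc)
        qed
        then show ?thesis by simp
      qed
      finally show ?thesis .
    qed
    show ?thesis by (intro Bochner_Integration.integral_cong refl) (simp only: inner)
  qed
  finally show ?thesis using k0 by simp
qed



lemma pC_ball_pos:
  fixes \<xi> :: "'a::euclidean_space"
  assumes n: "norm \<xi> = 1" and d: "\<delta> > 0"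
  shows "(LINT y|lborel. pC (ball \<xi> \<delta>) y) > 0"
proof -
  define A where "A = B0 \<inter> {y::'a. y /\<^sub>R norm y \<in> ball \<xi> \<delta>}"
  have pA: "pC (ball \<xi> \<delta>) = indicator A" unfolding pC_def[abs_def] A_def by (auto simp: indicator_def fun_eq_iff)
  have Am: "A \<in> sets lborel"
  proof -
    have "(\<lambda>y::'a. y /\<^sub>R norm y) -` ball \<xi> \<delta> \<in> sets borel"
      using measurable_sets_borel[OF e_meas, of "ball \<xi> \<delta>"] by auto
    then have "A = B0 \<inter> ((\<lambda>y::'a. y /\<^sub>R norm y) -` ball \<xi> \<delta>)" "B0 \<in> sets (borel :: 'a measure)"
      by (auto simp: A_def)
    then show ?thesis using \<open>(\<lambda>y::'a. y /\<^sub>R norm y) -` ball \<xi> \<delta> \<in> sets borel\<close> by auto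
  qed
  have Af: "A \<in> fmeasurable lborel"
  proof (rule fmeasurableI2[OF _ _ Am])
    show "ball (0::'a) 1 \<in> fmeasurable lborel" using emeasure_lborel_ball_finite[of "0::'a" 1]
      by (auto simp: fmeasurable_def)
    show "A \<subseteq> ball 0 1" by (auto simp: A_def)
  qed
  define \<rho> where "\<rho> = min (1/4) (\<delta>/8)"
  have \<rho>: "\<rho> > 0" "\<rho> \<le> 1/4" "8 * \<rho> \<le> \<delta>" using d by (auto simp: \<rho>_def)
  define c where "c = (1/2) *\<^sub>R \<xi>"
  have nc: "norm c = 1/2" using n by (simp add: c_def)
  have sub: "ball c \<rho> \<subseteq> A"
  proof
    fix y assume "y \<in> ball c \<rho>"
    then have yc: "norm (y - c) < \<rho>" by (simp add: dist_norm norm_minus_commute)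
    have ny1: "\<bar>norm y - 1/2\<bar> \<le> norm (y - c)"
      using norm_triangle_ineq3[of y c] nc by simp
    then have ny: "norm y > 1/4" "norm y < 1" using yc \<rho> by auto
    have "norm (y - norm y *\<^sub>R \<xi>) \<le> norm (y - c) + norm (c - norm y *\<^sub>R \<xi>)"
      using norm_triangle_ineq[of "y - c" "c - norm y *\<^sub>R \<xi>"] by simp
    also have "norm (c - norm y *\<^sub>R \<xi>) = \<bar>1/2 - norm y\<bar>"
      unfolding c_def scaleR_diff_left[symmetric] using n by simp
    also have "\<bar>1/2 - norm y\<bar> \<le> norm (y - c)" using ny1 by linarith
    finally have t: "norm (y - norm y *\<^sub>R \<xi>) < 2 * \<rho>" using yc by linarith
    have "y /\<^sub>R norm y - \<xi> = (1 / norm y) *\<^sub>R (y - norm y *\<^sub>R \<xi>)"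
      proof - have "y \<noteq> 0" using ny by auto then show ?thesis by (simp add: algebra_simps divide_inverse) qed
    then have "norm (y /\<^sub>R norm y - \<xi>) = norm (y - norm y *\<^sub>R \<xi>) / norm y"
      using ny by simp
    also have "\<dots> \<le> norm (y - norm y *\<^sub>R \<xi>) / (1/4)"
      using ny by (intro divide_left_mono) auto
    also have "\<dots> < \<delta>" using t \<rho> by simp
    finally have "y /\<^sub>R norm y \<in> ball \<xi> \<delta>" by (simp add: dist_norm norm_minus_commute)
    moreover have "y \<in> B0" using ny by auto
    ultimately show "y \<in> A" by (simp add: A_def)
  qed
  have "0 < measure lborel (ball c \<rho>)" using content_ball_pos[OF \<rho>(1)] by simp
  also have "\<dots> \<le> measure lborel A" by (rule measure_mono_fmeasurable[OF sub _ Af]) simp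
  also have "\<dots> = (LINT y|lborel. pC (ball \<xi> \<delta>) y)" unfolding pA by simp
  finally show ?thesis .
qed

lemma extract_diff:
  fixes a :: "'a::euclidean_space \<Rightarrow> complex" and xi0 eta0 :: 'a
  assumes a: "integrable lborel a"
  and H: "\<forall>u\<in>herglotz_space. \<forall>v\<in>herglotz_space. (LINT x|lborel. a x * u x * cnj (v x)) = 0"
  and n1: "norm xi0 = 1" and n2: "norm eta0 = 1"
  shows "(LINT x|lborel. a x * cis (x \<bullet> (xi0 - eta0))) = 0"
proof -
  define G where "G \<zeta> = (LINT x|lborel. a x * cis (x \<bullet> \<zeta>))" for \<zeta> :: 'a
  have Gc: "continuous_on UNIV G" unfolding G_def[abs_def] by (rule G_cont[OF a])
  have Gm[measurable]: "G \<in> borel_measurable borel" using Gc by (rule borel_measurable_continuous_onI)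
  define N where "N = (LINT x|lborel. norm (a x))"
  have Gb: "norm (G \<zeta>) \<le> N" for \<zeta> unfolding G_def N_def by (rule G_bound)
  define g0 where "g0 = G (xi0 - eta0)"
  have main: "norm g0 \<le> 0 + \<epsilon>" if \<epsilon>: "\<epsilon> > 0" for \<epsilon>
  proof -
    obtain \<delta> where \<delta>: "\<delta> > 0" and Gd: "\<And>\<zeta>. dist \<zeta> (xi0 - eta0) < \<delta> \<Longrightarrow> dist (G \<zeta>) g0 < \<epsilon>"
      using Gc \<epsilon> unfolding continuous_on_iff g0_def by (metis UNIV_I)
    define C1 where "C1 = ball xi0 (\<delta>/2)"
    define C2 where "C2 = ball eta0 (\<delta>/2)"
    have C1m[measurable]: "C1 \<in> sets borel" and C2m[measurable]: "C2 \<in> sets borel" by (auto simp: C1_def C2_def)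
    define p where "p = pC C1"
    define q where "q = pC C2"
    have pm[measurable]: "p \<in> borel_measurable borel" and qm[measurable]: "q \<in> borel_measurable borel"
      unfolding p_def q_def by measurable
    have pint: "integrable lborel p" and qint: "integrable lborel q"
      unfolding p_def q_def by (auto intro: pC_integrable)
    define P where "P = (LINT y|lborel. p y)"
    define Q where "Q = (LINT y|lborel. q y)"
    have P0: "P > 0" unfolding P_def p_def C1_def using pC_ball_pos[OF n1] \<delta> by simp
    have Q0: "Q > 0" unfolding Q_def q_def C2_def using pC_ball_pos[OF n2] \<delta> by simp
    have p0: "p y \<ge> 0" and q0: "q y \<ge> 0" for y unfolding p_def q_def by (rule pC_nonneg)+
    have Phi: "(LINT y|lborel. p y *\<^sub>R (LINT z|lborel. q z *\<^sub>R G (y /\<^sub>R norm y - z /\<^sub>R norm z))) = 0"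
      unfolding p_def q_def G_def using hyp_Phi[OF a H C1m C2m] .
    define I where "I y = (LINT z|lborel. q z *\<^sub>R G (y /\<^sub>R norm y - z /\<^sub>R norm z))" for y
    have Im[measurable]: "I \<in> borel_measurable lborel" unfolding I_def by measurable
    have Iint: "integrable lborel (\<lambda>z. q z *\<^sub>R G (y /\<^sub>R norm y - z /\<^sub>R norm z))" for y
    proof (rule Bochner_Integration.integrable_bound)
      show "integrable lborel (\<lambda>z. N *\<^sub>R q z)" using qint by auto
      show "(\<lambda>z. q z *\<^sub>R G (y /\<^sub>R norm y - z /\<^sub>R norm z)) \<in> borel_measurable lborel" by measurable
      show "AE z in lborel. norm (q z *\<^sub>R G (y /\<^sub>R norm y - z /\<^sub>R norm z)) \<le> norm (N *\<^sub>R q z)"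
      proof (intro AE_I2)
        fix z
        have "q z * norm (G (y /\<^sub>R norm y - z /\<^sub>R norm z)) \<le> q z * \<bar>N\<bar>"
          using Gb[of "y /\<^sub>R norm y - z /\<^sub>R norm z"] q0[of z] by (intro mult_left_mono) auto
        then show "norm (q z *\<^sub>R G (y /\<^sub>R norm y - z /\<^sub>R norm z)) \<le> norm (N *\<^sub>R q z)"
          using q0[of z] by (simp add: abs_mult mult.commute)
      qed
    qed
    define D where "D y = I y - Q *\<^sub>R g0" for y
    have Dm[measurable]: "D \<in> borel_measurable lborel" unfolding D_def by measurable
    have Dint: "D y = (LINT z|lborel. q z *\<^sub>R (G (y /\<^sub>R norm y - z /\<^sub>R norm z) - g0))" for y
    proof -
      have "(LINT z|lborel. q z *\<^sub>R (G (y /\<^sub>R norm y - z /\<^sub>R norm z) - g0))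
          = (LINT z|lborel. q z *\<^sub>R G (y /\<^sub>R norm y - z /\<^sub>R norm z) - q z *\<^sub>R g0)"
        by (simp add: scaleR_diff_right)
      also have "\<dots> = I y - Q *\<^sub>R g0"
        unfolding I_def Q_def using Iint[of y] qint by (subst Bochner_Integration.integral_diff) auto
      finally show ?thesis unfolding D_def by simp
    qed
    have Db: "norm (p y *\<^sub>R D y) \<le> p y * (\<epsilon> * Q)" for y
    proof (cases "p y = 0")
      case True then show ?thesis by simp
    next
      case False
      then have ey: "y /\<^sub>R norm y \<in> C1" unfolding p_def pC_def by (auto simp: indicator_def split: if_splits)
      have "norm (D y) \<le> (LINT z|lborel. norm (q z *\<^sub>R (G (y /\<^sub>R norm y - z /\<^sub>R norm z) - g0)))"
        unfolding Dint by (rule integral_norm_bound)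
      also have "\<dots> \<le> (LINT z|lborel. \<epsilon> * q z)"
      proof (rule integral_mono_AE')
        show "integrable lborel (\<lambda>z. \<epsilon> * q z)" using qint by auto
        show "AE z in lborel. 0 \<le> \<epsilon> * q z" using \<epsilon> q0 by auto
        show "AE z in lborel. norm (q z *\<^sub>R (G (y /\<^sub>R norm y - z /\<^sub>R norm z) - g0)) \<le> \<epsilon> * q z"
        proof (intro AE_I2)
          fix z
          show "norm (q z *\<^sub>R (G (y /\<^sub>R norm y - z /\<^sub>R norm z) - g0)) \<le> \<epsilon> * q z"
          proof (cases "q z = 0")
            case True then show ?thesis by simp
          next
            case False
            then have ez: "z /\<^sub>R norm z \<in> C2" unfolding q_def pC_def by (auto simp: indicator_def split: if_splits)
            have "dist (y /\<^sub>R norm y - z /\<^sub>R norm z) (xi0 - eta0)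
                \<le> dist (y /\<^sub>R norm y) xi0 + dist (z /\<^sub>R norm z) eta0"
              unfolding dist_norm
              using norm_triangle_ineq4[of "y /\<^sub>R norm y - xi0" "z /\<^sub>R norm z - eta0"]
              by (simp add: algebra_simps)
            also have "\<dots> < \<delta>/2 + \<delta>/2" using ey ez
              by (intro add_strict_mono) (auto simp: C1_def C2_def dist_commute)
            finally have "dist (G (y /\<^sub>R norm y - z /\<^sub>R norm z)) g0 < \<epsilon>" by (intro Gd) simp
            then have "norm (G (y /\<^sub>R norm y - z /\<^sub>R norm z) - g0) \<le> \<epsilon>" by (simp add: dist_norm)
            then show ?thesis using q0[of z] by (simp add: mult.commute[of \<epsilon>] mult_left_mono)
          qed
        qed
      qed
      also have "\<dots> = \<epsilon> * Q" unfolding Q_def by simp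
      finally have "norm (D y) \<le> \<epsilon> * Q" .
      then show ?thesis using p0[of y] by (simp add: mult_left_mono)
    qed
    have pDint: "integrable lborel (\<lambda>y. p y *\<^sub>R D y)"
    proof (rule Bochner_Integration.integrable_bound)
      show "integrable lborel (\<lambda>y. (\<epsilon> * Q) *\<^sub>R p y)" using pint by auto
      show "(\<lambda>y. p y *\<^sub>R D y) \<in> borel_measurable lborel" by measurable
      show "AE y in lborel. norm (p y *\<^sub>R D y) \<le> norm ((\<epsilon> * Q) *\<^sub>R p y)"
        using Db p0 \<epsilon> Q0 by (intro AE_I2) (auto simp: abs_mult mult.commute)
    qed
    have "0 = (LINT y|lborel. p y *\<^sub>R I y)" using Phi unfolding I_def by simp
    also have "\<dots> = (LINT y|lborel. p y *\<^sub>R (Q *\<^sub>R g0) + p y *\<^sub>R D y)"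
      by (simp add: D_def scaleR_diff_right)
    also have "\<dots> = P *\<^sub>R (Q *\<^sub>R g0) + (LINT y|lborel. p y *\<^sub>R D y)"
      unfolding P_def using pint pDint by (subst Bochner_Integration.integral_add) auto
    finally have eq: "P *\<^sub>R (Q *\<^sub>R g0) = - (LINT y|lborel. p y *\<^sub>R D y)"
      by (simp add: eq_neg_iff_add_eq_0)
    have "P * Q * norm g0 = norm (LINT y|lborel. p y *\<^sub>R D y)"
      using arg_cong[OF eq, of norm] P0 Q0 by simp
    also have "\<dots> \<le> (LINT y|lborel. norm (p y *\<^sub>R D y))" by (rule integral_norm_bound)
    also have "\<dots> \<le> (LINT y|lborel. p y * (\<epsilon> * Q))"
      by (intro integral_mono integrable_norm[OF pDint]) (use pint Db in auto)
    also have "\<dots> = P * (\<epsilon> * Q)" unfolding P_def by simp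
    finally have "(P * Q) * norm g0 \<le> (P * Q) * \<epsilon>" by (simp add: algebra_simps)
    then show ?thesis using P0 Q0 by simp
  qed
  have "norm g0 \<le> 0" by (rule field_le_epsilon) (rule main)
  then show ?thesis unfolding g0_def G_def by simp
qed



lemma unit_orth:
  fixes z :: "'a::euclidean_space"
  assumes d2: "DIM('a) \<ge> 2"
  shows "\<exists>w. norm w = 1 \<and> w \<bullet> z = 0"
proof -
  have "Basis \<noteq> ({} :: 'a set)" by simp
  then obtain b1 :: 'a where b1: "b1 \<in> Basis" by blast
  have "card (Basis - {b1} :: 'a set) \<ge> 1" using d2 b1 by (simp add: card_Diff_singleton)
  then have "Basis - {b1} \<noteq> ({} :: 'a set)" by (metis card.empty not_one_le_zero)
  then obtain b2 where b2: "b2 \<in> Basis" "b2 \<noteq> b1" by blast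
  have o: "b1 \<bullet> b2 = 0" "b2 \<bullet> b1 = 0" using b1 b2 by (auto simp: inner_not_same_Basis)
  have u: "b1 \<bullet> b1 = 1" "b2 \<bullet> b2 = 1" using b1 b2 by auto
  define v where "v = (z \<bullet> b2) *\<^sub>R b1 - (z \<bullet> b1) *\<^sub>R b2"
  have vz: "v \<bullet> z = 0" unfolding v_def inner_diff_left inner_scaleR_left inner_commute[of b1 z] inner_commute[of b2 z]
    by (simp add: mult.commute)
  show ?thesis
  proof (cases "v = 0")
    case False
    then show ?thesis using vz by (intro exI[of _ "v /\<^sub>R norm v"]) auto
  next
    case True
    have "v \<bullet> b2 = - (z \<bullet> b1)" unfolding v_def using o u by (simp add: inner_diff_left)
    then have "z \<bullet> b1 = 0" using True by simp
    then show ?thesis using b1 by (intro exI[of _ b1]) (auto simp: inner_commute)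
  qed
qed

lemma diff_units:
  fixes z :: "'a::euclidean_space"
  assumes d2: "DIM('a) \<ge> 2" and nz: "norm z < 2"
  shows "\<exists>x y. norm x = 1 \<and> norm y = 1 \<and> x - y = z"
proof -
  obtain w :: 'a where w: "norm w = 1" "w \<bullet> z = 0" using unit_orth[OF d2] by blast
  define s where "s = sqrt (1 - (norm z)\<^sup>2 / 4)"
  have s2: "s\<^sup>2 = 1 - (norm z)\<^sup>2 / 4"
  proof -
    have "(norm z)\<^sup>2 < 2\<^sup>2" by (rule power_strict_mono) (use nz in auto)
    then have "(norm z)\<^sup>2 < 4" by simp
    then show ?thesis unfolding s_def by simp
  qed
  have ww: "w \<bullet> w = 1" using w(1) by (simp add: power2_norm_eq_inner[symmetric])
  have zz: "z \<bullet> z = (norm z)\<^sup>2" by (simp add: power2_norm_eq_inner)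
  have zw: "z \<bullet> w = 0" using w(2) by (simp add: inner_commute)
  define x where "x = (1/2) *\<^sub>R z + s *\<^sub>R w"
  define y where "y = (-1/2) *\<^sub>R z + s *\<^sub>R w"
  have "x \<bullet> x = 1"
    unfolding x_def using ww zz zw w(2) s2 by (simp add: inner_add_left inner_add_right power2_eq_square algebra_simps)
  then have nx: "norm x = 1" by (simp add: norm_eq_sqrt_inner)
  have "y \<bullet> y = 1"
    unfolding y_def using ww zz zw w(2) s2 by (simp add: inner_add_left inner_add_right power2_eq_square algebra_simps)
  then have ny: "norm y = 1" by (simp add: norm_eq_sqrt_inner)
  have "x - y = (1/2) *\<^sub>R z + (1/2) *\<^sub>R z" unfolding x_def y_def by (simp add: algebra_simps)
  also have "\<dots> = z" by (simp flip: scaleR_add_left)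
  finally have "x - y = z" .
  then show ?thesis using nx ny by blast
qed

theorem proposition5p3:
  fixes a :: "'a::euclidean_space \<Rightarrow> complex"
  assumes "DIM('a) \<ge> 2"
    and "integrable lborel a"
    and "\<exists>K. compact K \<and> (AE x in lborel. x \<notin> K \<longrightarrow> a x = 0)"
    and "\<forall>u\<in>herglotz_space. \<forall>v\<in>herglotz_space.
           (LINT x|lborel. a x * u x * cnj (v x)) = 0"
  shows "AE x in lborel. a x = 0"
proof -
  note d2 = assms(1) and a = assms(2) and H = assms(4)
  obtain K where K: "compact K" and supp: "AE x in lborel. x \<notin> K \<longrightarrow> a x = 0" using assms(3) by blast
  have small: "\<forall>\<zeta>::'a. norm \<zeta> < 2 \<longrightarrow> (LINT x|lborel. a x * cis (x \<bullet> \<zeta>)) = 0"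
  proof (intro allI impI)
    fix \<zeta> :: 'a assume "norm \<zeta> < 2"
    then obtain x y :: 'a where "norm x = 1" "norm y = 1" "x - y = \<zeta>" using diff_units[OF d2] by blast
    then show "(LINT t|lborel. a t * cis (t \<bullet> \<zeta>)) = 0" using extract_diff[OF a H] by blast
  qed
  have all: "\<forall>\<zeta>::'a. (LINT x|lborel. a x * cis (x \<bullet> \<zeta>)) = 0"
    using fourier_extend[OF a K supp _ small] by simp
  show ?thesis
    using ae_zero_if_cont_orth[OF a fourier_zero_orth[OF a K supp all]] .
qed


end
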